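(* Let $G$ be a finite simple graph with edge weight function $w$ and vertex weight function $w_1$. Then all roots of $\eta_{(w,w_1)}(G,x)$ are real.
   Context: An edge weight function $w$ assigns a nonzero complex number to each edge; a vertex weight function $w_1$ assigns a real number (possibly $0$) to each vertex; induced subgraphs carry restricted weights. For $A\subseteq E(G)$, $w(A)=\prod_{e\in A}w(e)$. $\mu_w(G,x)=\sum_{M}(-1)^{|M|}|w(M)|^2x^{n-2|M|}$ over all matchings $M$ of $G$ (including empty), $n=|V(G)|$. $\eta_{(w,w_1)}(G,x)=\sum_{S\subseteq V(G)}(-1)^{|V(G)\setminus S|}\big(\prod_{v\in V(G)\setminus S}w_1(v)\big)\mu_w(G[S],x)$ with $G[S]$ the induced subgraph and $\mu_w$ of the empty graph equal to $1$. *)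

theory Defs
  imports "HOL-Computational_Algebra.Polynomial" Complex_Main
begin

definition simple_graph :: "'a set \<Rightarrow> 'a set set \<Rightarrow> bool" where
  "simple_graph V E \<longleftrightarrow> finite V \<and> (\<forall>e\<in>E. e \<subseteq> V \<and> card e = 2)"

definition matchings :: "'a set set \<Rightarrow> 'a set set set" where
  "matchings E = {M. M \<subseteq> E \<and> (\<forall>e\<in>M. \<forall>f\<in>M. e \<noteq> f \<longrightarrow> e \<inter> f = {})}"

definition induced_edges :: "'a set set \<Rightarrow> 'a set \<Rightarrow> 'a set set" where
  "induced_edges E S = {e\<in>E. e \<subseteq> S}"

definition mu_w :: "'a set \<Rightarrow> 'a set set \<Rightarrow> ('a set \<Rightarrow> complex) \<Rightarrow> real poly" where
  "mu_w V E w = (\<Sum>M\<in>matchings E.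
      monom ((-1) ^ card M * (cmod (\<Prod>e\<in>M. w e))\<^sup>2) (card V - 2 * card M))"

definition eta_w :: "'a set \<Rightarrow> 'a set set \<Rightarrow> ('a set \<Rightarrow> complex) \<Rightarrow> ('a \<Rightarrow> real) \<Rightarrow> real poly" where
  "eta_w V E w w1 = (\<Sum>S\<in>Pow V.
      smult ((-1) ^ card (V - S) * (\<Prod>v\<in>V - S. w1 v)) (mu_w S (induced_edges E S) w))"

end

theory Submission
  imports Defs
begin

definition mp :: "'a set set \<Rightarrow> ('a set \<Rightarrow> complex) \<Rightarrow> ('a \<Rightarrow> complex) \<Rightarrow> 'a set \<Rightarrow> complex" where
 "mp E c x V = (\<Sum>M\<in>matchings (induced_edges E V). (-1)^card M * (\<Prod>e\<in>M. c e) * (\<Prod>v\<in>V - \<Union>M. x v))"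

lemma fin_mat: "finite E \<Longrightarrow> finite (matchings (induced_edges E V))"
  unfolding matchings_def induced_edges_def
  by (rule finite_subset[of _ "Pow E"]) auto

lemma mp_rec:
  assumes fE: "finite E" and c2: "\<forall>e\<in>E. card e = 2" and fV: "finite V" and u: "u \<in> V"
  shows "mp E c x V = x u * mp E c x (V - {u}) - (\<Sum>e\<in>{e\<in>induced_edges E V. u \<in> e}. c e * mp E c x (V - e))"
proof -
  define A where "A = matchings (induced_edges E V)"
  define Eu where "Eu = {e\<in>induced_edges E V. u \<in> e}"
  define f where "f = (\<lambda>V M. (-1::complex)^card M * (\<Prod>e\<in>M. c e) * (\<Prod>v\<in>V - \<Union>M. x v))"
  have mpf: "\<And>W. mp E c x W = sum (f W) (matchings (induced_edges E W))" by (simp add: mp_def f_def)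
  have A1: "{M\<in>A. u \<notin> \<Union>M} = matchings (induced_edges E (V - {u}))"
    by (auto simp: A_def matchings_def induced_edges_def)
  have A2: "{M\<in>A. u \<in> \<Union>M} = (\<Union>e\<in>Eu. insert e ` matchings (induced_edges E (V - e)))"
  proof
    show "{M\<in>A. u \<in> \<Union>M} \<subseteq> (\<Union>e\<in>Eu. insert e ` matchings (induced_edges E (V - e)))"
    proof
      fix M assume "M \<in> {M\<in>A. u \<in> \<Union>M}"
      then obtain e where M: "M \<in> A" "e \<in> M" "u \<in> e" by auto
      have eEu: "e \<in> Eu" using M by (auto simp: A_def Eu_def matchings_def induced_edges_def)
      have "M - {e} \<in> matchings (induced_edges E (V - e))"
        using M unfolding A_def matchings_def induced_edges_def by blast
      moreover have "M = insert e (M - {e})" using M by auto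
      ultimately show "M \<in> (\<Union>e\<in>Eu. insert e ` matchings (induced_edges E (V - e)))" using eEu by blast
    qed
    show "(\<Union>e\<in>Eu. insert e ` matchings (induced_edges E (V - e))) \<subseteq> {M\<in>A. u \<in> \<Union>M}"
      unfolding A_def Eu_def matchings_def induced_edges_def by blast
  qed
  have finA: "finite A" using fin_mat[OF fE] by (simp add: A_def)
  have "mp E c x V = sum (f V) {M\<in>A. u \<notin> \<Union>M} + sum (f V) {M\<in>A. u \<in> \<Union>M}"
  proof -
    have "A = {M\<in>A. u \<notin> \<Union>M} \<union> {M\<in>A. u \<in> \<Union>M}" by auto
    then have "sum (f V) A = sum (f V) {M\<in>A. u \<notin> \<Union>M} + sum (f V) {M\<in>A. u \<in> \<Union>M}"
      using finA by (metis (no_types, lifting) sum.union_disjoint finite_Un disjoint_iff mem_Collect_eq)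
    then show ?thesis by (simp add: mpf A_def)
  qed
  also have "sum (f V) {M\<in>A. u \<notin> \<Union>M} = x u * mp E c x (V - {u})"
    unfolding A1 mpf sum_distrib_left
  proof (rule sum.cong[OF refl])
    fix M assume M: "M \<in> matchings (induced_edges E (V - {u}))"
    then have "\<Union>M \<subseteq> V - {u}" by (auto simp: matchings_def induced_edges_def)
    then have "V - \<Union>M = insert u ((V - {u}) - \<Union>M)" using u by auto
    then have "(\<Prod>v\<in>V - \<Union>M. x v) = x u * (\<Prod>v\<in>(V - {u}) - \<Union>M. x v)"
      using fV by (simp add: prod.insert)
    then show "f V M = x u * f (V - {u}) M" by (simp add: f_def)
  qed
  also have "sum (f V) {M\<in>A. u \<in> \<Union>M} = - (\<Sum>e\<in>Eu. c e * mp E c x (V - e))"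
  proof -
    have finEu: "finite Eu" using fE by (simp add: Eu_def induced_edges_def)
    have "sum (f V) {M\<in>A. u \<in> \<Union>M} = (\<Sum>e\<in>Eu. sum (f V) (insert e ` matchings (induced_edges E (V - e))))"
      unfolding A2
    proof (rule sum.UNION_disjoint[OF finEu])
      show "\<forall>e\<in>Eu. finite (insert e ` matchings (induced_edges E (V - e)))"
        using fin_mat[OF fE] by blast
      show "\<forall>e\<in>Eu. \<forall>e'\<in>Eu. e \<noteq> e' \<longrightarrow> insert e ` matchings (induced_edges E (V - e)) \<inter> insert e' ` matchings (induced_edges E (V - e')) = {}"
      proof (intro ballI impI)
        fix e e' assume ee: "e \<in> Eu" "e' \<in> Eu" "e \<noteq> e'"
        show "insert e ` matchings (induced_edges E (V - e)) \<inter> insert e' ` matchings (induced_edges E (V - e')) = {}"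
        proof (rule ccontr)
          assume "insert e ` matchings (induced_edges E (V - e)) \<inter> insert e' ` matchings (induced_edges E (V - e')) \<noteq> {}"
          then obtain M1 M2 where M1: "M1 \<in> matchings (induced_edges E (V - e))" and
            M2: "M2 \<in> matchings (induced_edges E (V - e'))" and eq: "insert e M1 = insert e' M2" by blast
          have "e' \<in> M1" using eq ee(3) by (metis insertE insertI1)
          then have "e' \<subseteq> V - e" using M1 by (simp add: matchings_def induced_edges_def subset_eq)
          moreover have "u \<in> e" "u \<in> e'" using ee by (auto simp: Eu_def)
          ultimately show False by blast
        qed
      qed
    qed
    also have "\<dots> = (\<Sum>e\<in>Eu. - (c e * mp E c x (V - e)))"
    proof (rule sum.cong[OF refl])
      fix e assume e: "e \<in> Eu"
      then have ne: "e \<noteq> {}" using c2 by (auto simp: Eu_def induced_edges_def)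
      have notin: "\<And>M'. M' \<in> matchings (induced_edges E (V - e)) \<Longrightarrow> e \<notin> M'"
        using ne by (auto simp: matchings_def induced_edges_def)
      have inj: "inj_on (insert e) (matchings (induced_edges E (V - e)))"
      proof (rule inj_onI)
        fix M1 M2 assume "M1 \<in> matchings (induced_edges E (V - e))" "M2 \<in> matchings (induced_edges E (V - e))"
          "insert e M1 = insert e M2"
        then show "M1 = M2" using notin by (metis insert_ident)
      qed
      have "sum (f V) (insert e ` matchings (induced_edges E (V - e))) = sum (f V \<circ> insert e) (matchings (induced_edges E (V - e)))"
        by (rule sum.reindex[OF inj])
      also have "\<dots> = sum (\<lambda>M'. - c e * f (V - e) M') (matchings (induced_edges E (V - e)))"
      proof (rule sum.cong[OF refl])
        fix M' assume M': "M' \<in> matchings (induced_edges E (V - e))"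
        have finM': "finite M'" using M' fin_mat[OF fE] 
          by (auto simp: matchings_def induced_edges_def intro: finite_subset[OF _ fE])
        have "V - \<Union>(insert e M') = (V - e) - \<Union>M'" by auto
        then show "(f V \<circ> insert e) M' = - c e * f (V - e) M'"
          using notin[OF M'] finM' by (simp add: f_def)
      qed
      also have "\<dots> = - (c e * mp E c x (V - e))"
        by (simp add: mpf sum_distrib_left sum_negf)
      finally show "sum (f V) (insert e ` matchings (induced_edges E (V - e))) = - (c e * mp E c x (V - e))" .
    qed
    finally show ?thesis by (simp add: sum_negf)
  qed
  finally show ?thesis by (simp add: Eu_def)
qed

lemma mp_empty:
  assumes c2: "\<forall>e\<in>E. card e = 2"
  shows "mp E c x {} = 1"
proof -
  have "induced_edges E {} = {}" using c2 by (force simp: induced_edges_def)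
  moreover have "matchings {} = {{}}" by (auto simp: matchings_def)
  ultimately have "matchings (induced_edges E {}) = {{}}" by simp
  then show ?thesis by (simp add: mp_def)
qed

lemma mp_stable:
  assumes fE: "finite E" and c2: "\<forall>e\<in>E. card e = 2"
    and cpos: "\<forall>e. Im (c e) = 0 \<and> Re (c e) \<ge> 0" and xpos: "\<forall>v. Im (x v) > 0"
  shows "finite V \<Longrightarrow> mp E c x V \<noteq> 0 \<and> (\<forall>u\<in>V. Im (mp E c x V / mp E c x (V - {u})) > 0)"
proof (induction "card V" arbitrary: V rule: less_induct)
  case less
  have ratio: "\<forall>u\<in>V. Im (mp E c x V / mp E c x (V - {u})) > 0 \<and> mp E c x (V - {u}) \<noteq> 0"
  proof
    fix u assume u: "u \<in> V"
    define V' where "V' = V - {u}"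
    have IH: "mp E c x V' \<noteq> 0 \<and> (\<forall>v\<in>V'. Im (mp E c x V' / mp E c x (V' - {v})) > 0)"
      using less(1)[of V'] less(2) card_Diff1_less[OF less(2) u] by (simp add: V'_def)
    define Eu where "Eu = {e\<in>induced_edges E V. u \<in> e}"
    have termIm: "Im (c e * mp E c x (V - e) / mp E c x V') \<le> 0" if e: "e \<in> Eu" for e
    proof -
      have "card e = 2" using e c2 by (auto simp: Eu_def induced_edges_def)
      then obtain a b where ab: "e = {a, b}" "a \<noteq> b" by (auto simp: card_2_iff)
      obtain v where ev: "e = {u, v}" "v \<noteq> u" using ab e by (auto simp: Eu_def)
      have vV: "v \<in> V'" using e ev by (auto simp: Eu_def induced_edges_def V'_def)
      have Ve: "V - e = V' - {v}" using ev by (auto simp: V'_def)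
      define q where "q = mp E c x V' / mp E c x (V' - {v})"
      have q: "Im q > 0" using IH vV by (simp add: q_def)
      have eq: "mp E c x (V - e) / mp E c x V' = inverse q" by (simp add: q_def Ve)
      have "Re q ^ 2 + Im q ^ 2 > 0" using q by (simp add: add_nonneg_pos)
      then have iq: "Im (inverse q) < 0" using q by (simp add: divide_pos_pos)
      have "Im (c e * inverse q) = Re (c e) * Im (inverse q)" using cpos by simp
      also have "\<dots> \<le> 0" using cpos iq by (meson less_imp_le mult_nonneg_nonpos)
      finally show ?thesis using eq by (metis times_divide_eq_right)
    qed
    have "mp E c x V = x u * mp E c x V' - (\<Sum>e\<in>Eu. c e * mp E c x (V - e))"
      using mp_rec[OF fE c2 less(2) u] by (simp add: V'_def Eu_def)
    then have "mp E c x V / mp E c x V' = x u - (\<Sum>e\<in>Eu. c e * mp E c x (V - e) / mp E c x V')"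
    proof -
      have m: "mp E c x V' \<noteq> 0" using IH by simp
      have "(\<Sum>e\<in>Eu. c e * mp E c x (V - e) / mp E c x V') = (\<Sum>e\<in>Eu. c e * mp E c x (V - e)) / mp E c x V'"
        by (simp add: sum_divide_distrib)
      moreover have "mp E c x V / mp E c x V' = x u - (\<Sum>e\<in>Eu. c e * mp E c x (V - e)) / mp E c x V'"
        using m \<open>mp E c x V = _\<close> by (simp add: field_simps)
      ultimately show ?thesis by simp
    qed
    then have "Im (mp E c x V / mp E c x V') = Im (x u) - (\<Sum>e\<in>Eu. Im (c e * mp E c x (V - e) / mp E c x V'))"
      by simp
    moreover have "(\<Sum>e\<in>Eu. Im (c e * mp E c x (V - e) / mp E c x V')) \<le> 0"
      using termIm by (simp add: sum_nonpos)
    ultimately have "Im (mp E c x V / mp E c x V') > 0" using xpos[rule_format, of u] by linarith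
    then show "Im (mp E c x V / mp E c x (V - {u})) > 0 \<and> mp E c x (V - {u}) \<noteq> 0"
      using IH by (simp add: V'_def)
  qed
  have "mp E c x V \<noteq> 0"
  proof (cases "V = {}")
    case True then show ?thesis using mp_empty[OF c2] by simp
  next
    case False
    then obtain u where u: "u \<in> V" by auto
    then have "Im (mp E c x V / mp E c x (V - {u})) > 0" "mp E c x (V - {u}) \<noteq> 0" using ratio by auto
    then show ?thesis by auto
  qed
  then show ?case using ratio by auto
qed

lemma mpr_add: "map_poly (of_real :: real \<Rightarrow> complex) (p + q) = map_poly of_real p + map_poly of_real q"
  by (rule poly_eqI) (simp add: coeff_map_poly)

lemma mpr_sum: "map_poly (of_real :: real \<Rightarrow> complex) (sum f A) = (\<Sum>x\<in>A. map_poly of_real (f x))"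
  by (induction A rule: infinite_finite_induct) (simp_all add: mpr_add)

lemma match_facts:
  assumes c2: "\<forall>e\<in>E. card e = 2" and fE: "finite E" and M: "M \<in> matchings (induced_edges E S)"
  shows "finite M" "\<Union>M \<subseteq> S" "finite (\<Union>M)" "card (\<Union>M) = 2 * card M"
proof -
  have ME: "M \<subseteq> E" and MS: "\<forall>e\<in>M. e \<subseteq> S" and disj: "\<forall>e\<in>M. \<forall>f\<in>M. e \<noteq> f \<longrightarrow> e \<inter> f = {}"
    using M by (auto simp: matchings_def induced_edges_def)
  show fM: "finite M" using ME fE by (rule finite_subset)
  show "\<Union>M \<subseteq> S" using MS by auto
  have fe: "\<And>e. e \<in> M \<Longrightarrow> finite e" using ME c2 by (metis card.infinite subsetD zero_neq_numeral)
  show "finite (\<Union>M)" using fM fe by auto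
  have "card (\<Union>M) = sum card M"
    by (rule card_Union_disjoint) (use disj fe in \<open>auto simp: pairwise_def disjnt_def\<close>)
  also have "\<dots> = sum (\<lambda>_. 2) M" using ME c2 by (intro sum.cong) auto
  also have "\<dots> = 2 * card M" by simp
  finally show "card (\<Union>M) = 2 * card M" .
qed

lemma eta_mp:
  assumes G: "simple_graph V E"
  shows "poly (map_poly complex_of_real (eta_w V E w w1)) z
    = mp E (\<lambda>e. complex_of_real ((cmod (w e))^2)) (\<lambda>v. z - complex_of_real (w1 v)) V"
proof -
  have fV: "finite V" and sub: "\<forall>e\<in>E. e \<subseteq> V" and c2: "\<forall>e\<in>E. card e = 2"
    using G by (auto simp: simple_graph_def)
  have fE: "finite E" using fV sub by (meson Pow_iff finite_Pow_iff finite_subset subsetI)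
  define g where "g = (\<lambda>S M. complex_of_real ((-1)^card (V-S) * (\<Prod>v\<in>V-S. w1 v)) *
      (complex_of_real ((-1)^card M * (cmod (\<Prod>e\<in>M. w e))^2) * z^(card S - 2*card M)))"
  define h where "h = (\<lambda>M T. (-1::complex)^card M * (\<Prod>e\<in>M. complex_of_real ((cmod (w e))^2)) *
      (z^card T * (\<Prod>v\<in>(V-\<Union>M)-T. - complex_of_real (w1 v))))"
  have L: "poly (map_poly of_real (eta_w V E w w1)) z = (\<Sum>S\<in>Pow V. \<Sum>M\<in>matchings (induced_edges E S). g S M)"
    by (simp add: eta_w_def mu_w_def mpr_sum poly_sum map_poly_smult map_poly_monom poly_monom g_def sum_distrib_left)
  have R: "mp E (\<lambda>e. complex_of_real ((cmod (w e))^2)) (\<lambda>v. z - complex_of_real (w1 v)) V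
      = (\<Sum>M\<in>matchings (induced_edges E V). \<Sum>T\<in>Pow (V-\<Union>M). h M T)"
    unfolding mp_def
  proof (rule sum.cong[OF refl])
    fix M assume M: "M \<in> matchings (induced_edges E V)"
    have "(\<Prod>v\<in>V - \<Union>M. z - complex_of_real (w1 v)) = (\<Prod>v\<in>V - \<Union>M. z + (- complex_of_real (w1 v)))"
      by simp
    also have "\<dots> = (\<Sum>T\<in>Pow (V - \<Union>M). z^card T * (\<Prod>v\<in>(V-\<Union>M)-T. - complex_of_real (w1 v)))"
      using prod_add[of "V - \<Union>M" "\<lambda>_. z" "\<lambda>v. - complex_of_real (w1 v)"] fV by simp
    finally show "(-1)^card M * (\<Prod>e\<in>M. complex_of_real ((cmod (w e))^2)) * (\<Prod>v\<in>V - \<Union>M. z - complex_of_real (w1 v))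
        = (\<Sum>T\<in>Pow (V-\<Union>M). h M T)"
      by (simp add: h_def sum_distrib_left)
  qed
  have key: "g (T \<union> \<Union>M) M = h M T" if M: "M \<in> matchings (induced_edges E V)" and T: "T \<subseteq> V - \<Union>M" for M T
  proof -
    note mf = match_facts[OF c2 fE M]
    have fT: "finite T" using T fV by (meson finite_Diff finite_subset)
    have "card (T \<union> \<Union>M) = card T + card (\<Union>M)"
      using T fT mf by (intro card_Un_disjoint) auto
    then have ex: "card (T \<union> \<Union>M) - 2 * card M = card T" using mf by simp
    have VS: "V - (T \<union> \<Union>M) = (V - \<Union>M) - T" by auto
    have 1: "complex_of_real ((-1)^card (V - (T \<union> \<Union>M)) * (\<Prod>v\<in>V - (T \<union> \<Union>M). w1 v))
        = (\<Prod>v\<in>(V-\<Union>M)-T. - complex_of_real (w1 v))"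
      unfolding VS by (simp add: prod_uminus of_real_prod)
    have 2: "complex_of_real ((-1)^card M * (cmod (\<Prod>e\<in>M. w e))^2)
        = (-1)^card M * (\<Prod>e\<in>M. complex_of_real ((cmod (w e))^2))"
      by (simp add: prod_norm[symmetric] prod_power_distrib of_real_prod)
    show ?thesis unfolding g_def h_def 1 2 ex by (simp add: algebra_simps)
  qed
  have finL: "\<forall>S\<in>Pow V. finite (matchings (induced_edges E S))" using fin_mat[OF fE] by blast
  have finR: "\<forall>M\<in>matchings (induced_edges E V). finite (Pow (V - \<Union>M))" using fV by simp
  have "(\<Sum>M\<in>matchings (induced_edges E V). \<Sum>T\<in>Pow (V-\<Union>M). h M T)
      = (\<Sum>(M,T)\<in>Sigma (matchings (induced_edges E V)) (\<lambda>M. Pow (V-\<Union>M)). h M T)"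
    by (rule sum.Sigma[OF fin_mat[OF fE] finR])
  also have "\<dots> = (\<Sum>(S,M)\<in>Sigma (Pow V) (\<lambda>S. matchings (induced_edges E S)). g S M)"
  proof (rule sum.reindex_bij_witness[where i="\<lambda>(S,M). (M, S - \<Union>M)" and j="\<lambda>(M,T). (T \<union> \<Union>M, M)"])
    fix a assume a: "a \<in> Sigma (matchings (induced_edges E V)) (\<lambda>M. Pow (V-\<Union>M))"
    then obtain M T where aMT: "a = (M,T)" and M: "M \<in> matchings (induced_edges E V)" and T: "T \<subseteq> V - \<Union>M" by auto
    note mf = match_facts[OF c2 fE M]
    show "(case (case a of (M, T) \<Rightarrow> (T \<union> \<Union> M, M)) of (S, M) \<Rightarrow> (M, S - \<Union> M)) = a"
      using aMT T by auto
    have "M \<in> matchings (induced_edges E (T \<union> \<Union>M))"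
      using M by (auto simp: matchings_def induced_edges_def)
    then show "(case a of (M, T) \<Rightarrow> (T \<union> \<Union> M, M)) \<in> Sigma (Pow V) (\<lambda>S. matchings (induced_edges E S))"
      using aMT T mf by auto
    show "(case (case a of (M, T) \<Rightarrow> (T \<union> \<Union> M, M)) of (S, M) \<Rightarrow> g S M) = (case a of (M, T) \<Rightarrow> h M T)"
      using aMT key[OF M T] by simp
  next
    fix b assume b: "b \<in> Sigma (Pow V) (\<lambda>S. matchings (induced_edges E S))"
    then obtain S M where bSM: "b = (S,M)" and S: "S \<subseteq> V" and M: "M \<in> matchings (induced_edges E S)" by auto
    note mf = match_facts[OF c2 fE M]
    show "(case (case b of (S, M) \<Rightarrow> (M, S - \<Union> M)) of (M, T) \<Rightarrow> (T \<union> \<Union> M, M)) = b"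
      using bSM mf by auto
    have "M \<in> matchings (induced_edges E V)"
      using M S by (auto simp: matchings_def induced_edges_def)
    then show "(case b of (S, M) \<Rightarrow> (M, S - \<Union> M)) \<in> Sigma (matchings (induced_edges E V)) (\<lambda>M. Pow (V-\<Union>M))"
      using bSM S by auto
  qed
  also have "\<dots> = (\<Sum>S\<in>Pow V. \<Sum>M\<in>matchings (induced_edges E S). g S M)"
    by (rule sum.Sigma[OF _ finL, symmetric]) (use fV in simp)
  finally show ?thesis using L R by simp
qed

lemma cnj_mpr: "map_poly cnj (map_poly complex_of_real p) = map_poly complex_of_real p"
  by (rule poly_eqI) (simp add: coeff_map_poly)

theorem corollary3p4:
  fixes V :: "'a set" and E :: "'a set set"
    and w :: "'a set \<Rightarrow> complex" and w1 :: "'a \<Rightarrow> real"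
  assumes "simple_graph V E"
    and "\<forall>e\<in>E. w e \<noteq> 0"
  shows "\<forall>z::complex. poly (map_poly complex_of_real (eta_w V E w w1)) z = 0 \<longrightarrow> Im z = 0"
proof (intro allI impI)
  fix z :: complex
  assume z: "poly (map_poly complex_of_real (eta_w V E w w1)) z = 0"
  have fV: "finite V" and sub: "\<forall>e\<in>E. e \<subseteq> V" and c2: "\<forall>e\<in>E. card e = 2"
    using assms(1) by (auto simp: simple_graph_def)
  have fE: "finite E" using fV sub by (meson Pow_iff finite_Pow_iff finite_subset subsetI)
  have nz: "poly (map_poly complex_of_real (eta_w V E w w1)) y \<noteq> 0" if y: "Im y > 0" for y
  proof -
    have "mp E (\<lambda>e. complex_of_real ((cmod (w e))^2)) (\<lambda>v. y - complex_of_real (w1 v)) V \<noteq> 0"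
      using mp_stable[OF fE c2, of "\<lambda>e. complex_of_real ((cmod (w e))^2)" "\<lambda>v. y - complex_of_real (w1 v)" V] y fV
      by simp
    then show ?thesis using eta_mp[OF assms(1)] by simp
  qed
  show "Im z = 0"
  proof (rule ccontr)
    assume "Im z \<noteq> 0"
    then consider "Im z > 0" | "Im (cnj z) > 0" by fastforce
    then show False
    proof cases
      case 1 then show False using nz z by blast
    next
      case 2
      have "poly (map_poly complex_of_real (eta_w V E w w1)) (cnj z) = cnj (poly (map_poly complex_of_real (eta_w V E w w1)) z)"
        by (simp add: poly_cnj cnj_mpr)
      then show False using nz[OF 2] z by simp
    qed
  qed
qed

end
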